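(* Let $\mathcal C$ be a clique of $\Gamma$ with $|\mathcal C|\ge 4$ which contains a linear $3$-clique (three elliptic ovoids belonging to a common rosette). Then $\mathcal C$ is a linear clique. In particular, a linear clique and a non-linear clique of $\Gamma$ share at most two vertices.
   Context: Let $q=2^n$ and let $Q_0\cong Q(4,q)$ be the parabolic quadric generalized quadrangle in $\mathrm{PG}(4,q)$. An elliptic ovoid of $Q_0$ is a set $X=S\cap Q_0$ where $S$ is a $3$-dimensional projective subspace meeting $Q_0$ in an elliptic quadric $Q^-(3,q)$. Two distinct elliptic ovoids meet in one point (then they are tangent) or in a conic. A rosette based at $p\in Q_0$ is a set of $q$ elliptic ovoids pairwise meeting exactly in $\{p\}$. $\Gamma$ is the graph whose vertices are the elliptic ovoids of $Q_0$, adjacent iff distinct and tangent. A clique of $\Gamma$ is linear if it is contained in some rosette (i.e. all its members pairwise meet in the same point), and non-linear otherwise. *)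

theory Defs
  imports "HOL-Analysis.Analysis"
begin

text \<open>Vectors of the underlying vector space V(5,q) of PG(4,q) are elements of 'a^5,
  where 'a is a finite field.  Projective points are 1-dimensional subspaces.\<close>

definition Qform :: "'a::field ^ 5 \<Rightarrow> 'a" where
  "Qform x = (x $ 0)^2 + (x $ 1) * (x $ 2) + (x $ 3) * (x $ 4)"

definition proj_point :: "('a::field ^ 5) set \<Rightarrow> bool" where
  "proj_point U \<longleftrightarrow> vec.subspace U \<and> vec.dim U = 1"

definition Q0 :: "('a::field ^ 5) set set" where
  "Q0 = {U. proj_point U \<and> (\<forall>v\<in>U. Qform v = 0)}"

text \<open>A solid (3-dimensional projective subspace) S meeting Q_0 in an elliptic quadric
  Q^-(3,q): in suitable coordinates of S the quadratic form restricted to S is (a nonzero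
  multiple of) the elliptic form y1 y2 + y3^2 + y3 y4 + d y4^2 with t^2+t+d irreducible.\<close>
definition elliptic_solid :: "('a::field ^ 5) set \<Rightarrow> bool" where
  "elliptic_solid S \<longleftrightarrow> vec.subspace S \<and> vec.dim S = 4 \<and>
     (\<exists>b1 b2 b3 b4 (c::'a) d. S = vec.span {b1, b2, b3, b4} \<and> c \<noteq> 0 \<and>
        (\<forall>t. t^2 + t + d \<noteq> 0) \<and>
        (\<forall>y1 y2 y3 y4. Qform (y1 *s b1 + y2 *s b2 + y3 *s b3 + y4 *s b4)
            = c * (y1 * y2 + y3^2 + y3 * y4 + d * y4^2)))"

definition elliptic_ovoid :: "('a::field ^ 5) set set \<Rightarrow> bool" where
  "elliptic_ovoid X \<longleftrightarrow> (\<exists>S. elliptic_solid S \<and> X = {p \<in> Q0. p \<subseteq> S})"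

definition adjacent :: "('a::field ^ 5) set set \<Rightarrow> ('a ^ 5) set set \<Rightarrow> bool" where
  "adjacent X Y \<longleftrightarrow> elliptic_ovoid X \<and> elliptic_ovoid Y \<and> X \<noteq> Y \<and> card (X \<inter> Y) = 1"

definition clique :: "('a::field ^ 5) set set set \<Rightarrow> bool" where
  "clique C \<longleftrightarrow> (\<forall>X\<in>C. elliptic_ovoid X) \<and> (\<forall>X\<in>C. \<forall>Y\<in>C. X \<noteq> Y \<longrightarrow> adjacent X Y)"

definition rosette :: "('a::field ^ 5) set \<Rightarrow> ('a ^ 5) set set set \<Rightarrow> bool" where
  "rosette p R \<longleftrightarrow> p \<in> Q0 \<and> (\<forall>X\<in>R. elliptic_ovoid X) \<and> card R = CARD('a) \<and>
     (\<forall>X\<in>R. \<forall>Y\<in>R. X \<noteq> Y \<longrightarrow> X \<inter> Y = {p})"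

definition linear_clique :: "('a::field ^ 5) set set set \<Rightarrow> bool" where
  "linear_clique C \<longleftrightarrow> clique C \<and> (\<exists>p R. rosette p R \<and> C \<subseteq> R)"

end

theory Submission
  imports Defs "HOL-Number_Theory.Residues"
begin


lemma aniso: fixes a b d :: "'a::field"
  assumes "\<forall>t::'a. t^2 + t + d \<noteq> 0" "a^2 + a*b + d*b^2 = 0" shows "a = 0 \<and> b = 0"
proof (cases "b = 0")
  case True then show ?thesis using assms(2) by simp
next
  case False
  have "(a/b)^2 + a/b + d = (a^2 + a*b + d*b^2) / b^2" using False
    by (simp add: field_simps power2_eq_square)
  then show ?thesis using assms False by simp
qed

lemma E1s: fixes Y1 Y2 Y3 Y4 Z1 Z2 Z3 Z4 d :: "'a::field"
  assumes two: "(2::'a) = 0" and an: "\<forall>t::'a. t^2 + t + d \<noteq> 0"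
   and i: "Y1*Y2 + Y3^2 + Y3*Y4 + d*Y4^2 = 0" and ii: "Z1*Z2 + Z3^2 + Z3*Z4 + d*Z4^2 = 0"
   and iii: "Y1*Z2+Y2*Z1+Y3*Z4+Y4*Z3 = 0"
   and nz: "\<not> (Y1 = 0 \<and> Y2 = 0 \<and> Y3 = 0 \<and> Y4 = 0)"
  shows "\<exists>k. Z1 = k*Y1 \<and> Z2 = k*Y2 \<and> Z3 = k*Y3 \<and> Z4 = k*Y4"
proof -
  have e1: "(Z1*Y3-Y1*Z3)^2 + (Z1*Y3-Y1*Z3)*(Z1*Y4-Y1*Z4) + d*(Z1*Y4-Y1*Z4)^2
     = Z1^2*(Y1*Y2 + Y3^2 + Y3*Y4 + d*Y4^2) + Y1^2*(Z1*Z2 + Z3^2 + Z3*Z4 + d*Z4^2)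
       - Z1*Y1*(Y1*Z2+Y2*Z1+Y3*Z4+Y4*Z3) - 2*(Z1*Y3*Y1*Z3 + d*Z1*Y4*Y1*Z4)" 
    by (simp add: algebra_simps power2_eq_square)
  have "(Z1*Y3-Y1*Z3)^2 + (Z1*Y3-Y1*Z3)*(Z1*Y4-Y1*Z4) + d*(Z1*Y4-Y1*Z4)^2 = 0"
    unfolding e1 i ii iii using two by simp
  from aniso[OF an this] have "Z1*Y3-Y1*Z3 = 0 \<and> Z1*Y4-Y1*Z4 = 0" .
  then have v3: "Z1*Y3 = Y1*Z3" and v4: "Z1*Y4 = Y1*Z4" by simp_all
  have e2: "(Z2*Y3-Y2*Z3)^2 + (Z2*Y3-Y2*Z3)*(Z2*Y4-Y2*Z4) + d*(Z2*Y4-Y2*Z4)^2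
     = Z2^2*(Y1*Y2 + Y3^2 + Y3*Y4 + d*Y4^2) + Y2^2*(Z1*Z2 + Z3^2 + Z3*Z4 + d*Z4^2)
       - Z2*Y2*(Y1*Z2+Y2*Z1+Y3*Z4+Y4*Z3) - 2*(Z2*Y3*Y2*Z3 + d*Z2*Y4*Y2*Z4)" 
    by (simp add: algebra_simps power2_eq_square)
  have "(Z2*Y3-Y2*Z3)^2 + (Z2*Y3-Y2*Z3)*(Z2*Y4-Y2*Z4) + d*(Z2*Y4-Y2*Z4)^2 = 0"
    unfolding e2 i ii iii using two by simp
  from aniso[OF an this] have "Z2*Y3-Y2*Z3 = 0 \<and> Z2*Y4-Y2*Z4 = 0" .
  then have w3: "Z2*Y3 = Y2*Z3" and w4: "Z2*Y4 = Y2*Z4" by simp_all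
  let ?V = "Y1*Z2+Y2*Z1"
  have a1: "Y1 * ?V = 0"
  proof -
    have "Y1 * ?V = Y1*(Y1*Z2+Y2*Z1+Y3*Z4+Y4*Z3) - (Y3*(Y1*Z4) + Y4*(Y1*Z3))"
      by (simp add: algebra_simps)
    also have "\<dots> = 0 - (Y3*(Z1*Y4) + Y4*(Z1*Y3))" by (simp only: iii v3 v4 mult_zero_right)
    also have "\<dots> = - (2 * (Z1*Y3*Y4))" by (simp add: algebra_simps)
    finally show ?thesis using two by simp
  qed
  have a2: "Z1 * ?V = 0"
  proof -
    have "Z1 * ?V = Z1*(Y1*Z2+Y2*Z1+Y3*Z4+Y4*Z3) - (Z4*(Z1*Y3) + Z3*(Z1*Y4))"
      by (simp add: algebra_simps)
    also have "\<dots> = 0 - (Z4*(Y1*Z3) + Z3*(Y1*Z4))" by (simp only: iii v3 v4 mult_zero_right)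
    also have "\<dots> = - (2 * (Y1*Z3*Z4))" by (simp add: algebra_simps)
    finally show ?thesis using two by simp
  qed
  have a3: "Y2 * ?V = 0"
  proof -
    have "Y2 * ?V = Y2*(Y1*Z2+Y2*Z1+Y3*Z4+Y4*Z3) - (Y3*(Y2*Z4) + Y4*(Y2*Z3))"
      by (simp add: algebra_simps)
    also have "\<dots> = 0 - (Y3*(Z2*Y4) + Y4*(Z2*Y3))" by (simp only: iii w3 w4 mult_zero_right)
    also have "\<dots> = - (2 * (Z2*Y3*Y4))" by (simp add: algebra_simps)
    finally show ?thesis using two by simp
  qed
  have a4: "Z2 * ?V = 0"
  proof -
    have "Z2 * ?V = Z2*(Y1*Z2+Y2*Z1+Y3*Z4+Y4*Z3) - (Z4*(Z2*Y3) + Z3*(Z2*Y4))"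
      by (simp add: algebra_simps)
    also have "\<dots> = 0 - (Z4*(Y2*Z3) + Z3*(Y2*Z4))" by (simp only: iii w3 w4 mult_zero_right)
    also have "\<dots> = - (2 * (Y2*Z3*Z4))" by (simp add: algebra_simps)
    finally show ?thesis using two by simp
  qed
  have y12: "Y1 \<noteq> 0 \<or> Y2 \<noteq> 0"
  proof (rule ccontr)
    assume "\<not> (Y1 \<noteq> 0 \<or> Y2 \<noteq> 0)"
    then have "Y3^2 + Y3*Y4 + d*Y4^2 = 0" using i by simp
    then show False using aniso[OF an] nz \<open>\<not> (Y1 \<noteq> 0 \<or> Y2 \<noteq> 0)\<close> by blast
  qed
  have V0: "?V = 0" using a1 a3 y12 by auto
  have V0': "Y1*Z2 = Y2*Z1"
  proof -
    have "Y1*Z2 = ?V - Y2*Z1" by simp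
    also have "\<dots> = - (Y2*Z1)" using V0 by simp
    also have "\<dots> = Y2*Z1 - 2*(Y2*Z1)" by simp
    finally show ?thesis using two by simp
  qed
  show ?thesis
  proof (cases "Y1 = 0")
    case False
    show ?thesis
      by (rule exI[of _ "Z1/Y1"]) (use False V0' v3 v4 in \<open>auto simp: field_simps\<close>)
  next
    case True
    then have "Y2 \<noteq> 0" using y12 by simp
    show ?thesis
      by (rule exI[of _ "Z2/Y2"]) (use \<open>Y2 \<noteq> 0\<close> V0' w3 w4 in \<open>auto simp: field_simps\<close>)
  qed
qed

lemma char2:
  assumes "finite (UNIV :: 'a::field set)" and "CARD('a) = 2 ^ n"
  shows "(2::'a) = 0"
proof -
  have pos: "CHAR('a) > 0" using assms(1) by (simp add: finite_imp_CHAR_pos)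
  have pr: "prime CHAR('a)" using prime_CHAR_semidom[OF pos] .
  have "CHAR('a) dvd 2 ^ n" using CHAR_dvd_CARD assms(2) by metis
  then have "CHAR('a) dvd 2" using pr prime_dvd_power by blast
  then have "CHAR('a) = 2" using pr by (metis primes_dvd_imp_eq two_is_prime_nat)
  then show ?thesis using of_nat_CHAR[where 'a='a] by simp
qed

definition Bf :: "'a::field ^ 5 \<Rightarrow> 'a ^ 5 \<Rightarrow> 'a" where
  "Bf x y = x$1 * y$2 + x$2 * y$1 + x$3 * y$4 + x$4 * y$3"

locale ch2 = fixes dummy :: "'a::field itself" assumes two: "(2::'a) = 0"
begin

lemma plus_self[simp]: "(x::'a) + x = 0"
  using two by (metis mult_2 mult_zero_left)

lemma minus_eq_plus: "(x::'a) - y = x + y"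
  by (metis add_diff_cancel_left' diff_add_cancel plus_self add.assoc add.commute)

lemma Q_add: "Qform (x + y :: 'a^5) = Qform x + Qform y + Bf x y"
proof -
  have "Qform (x + y) = Qform x + Qform y + Bf x y + 2 * (x$0*y$0)"
    unfolding Qform_def Bf_def by (simp add: power2_eq_square algebra_simps)
  then show ?thesis using two by simp
qed

lemma Q_scale: "Qform (k *s x :: 'a^5) = k^2 * Qform x"
  unfolding Qform_def by (simp add: power2_eq_square algebra_simps)

lemma B_sym: "Bf x (y::'a^5) = Bf y x"
  unfolding Bf_def by (simp add: algebra_simps)

lemma B_self: "Bf x (x::'a^5) = 0"
proof -
  have "Bf x x = 2 * (x$1*x$2 + x$3*x$4)" unfolding Bf_def by (simp add: algebra_simps mult_2)
  then show ?thesis using two by simp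
qed

lemma B_add2: "Bf x (y + z :: 'a^5) = Bf x y + Bf x z"
  unfolding Bf_def by (simp add: algebra_simps)
lemma B_add1: "Bf (y + z :: 'a^5) x = Bf y x + Bf z x"
  unfolding Bf_def by (simp add: algebra_simps)
lemma B_scale2: "Bf x (k *s y :: 'a^5) = k * Bf x y"
  unfolding Bf_def by (simp add: algebra_simps)
lemma B_scale1: "Bf (k *s y :: 'a^5) x = k * Bf y x"
  unfolding Bf_def by (simp add: algebra_simps)
lemma B_diff2: "Bf x (y - z :: 'a^5) = Bf x y - Bf x z"
  unfolding Bf_def by (simp add: algebra_simps)
lemma B_diff1: "Bf (y - z :: 'a^5) x = Bf y x - Bf z x"
  unfolding Bf_def by (simp add: algebra_simps)
lemma B_zero[simp]: "Bf 0 x = 0" "Bf x 0 = 0"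
  unfolding Bf_def by simp_all

end

definition pt :: "'a::field ^ 5 \<Rightarrow> ('a ^ 5) set" where "pt v = vec.span {v}"

lemma pt_eq_range: "pt v = range (\<lambda>k. k *s v)"
  unfolding pt_def by (rule vec.span_singleton)

lemma proj_point_pt: "v \<noteq> 0 \<Longrightarrow> proj_point (pt v)"
  unfolding proj_point_def pt_def by (simp add: vec.subspace_span)

lemma proj_point_ex: assumes "proj_point U" shows "\<exists>v. v \<noteq> 0 \<and> U = pt v"
proof -
  from assms have sub: "vec.subspace U" and d: "vec.dim U = 1" by (auto simp: proj_point_def)
  obtain B where B: "B \<subseteq> U" "vec.independent B" "U \<subseteq> vec.span B" "card B = vec.dim U"
    using vec.basis_exists by blast
  with d obtain v where v: "B = {v}" by (metis card_1_singletonE)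
  have "v \<noteq> 0" using B(2) v vec.dependent_zero by blast
  moreover have "U = pt v"
    using B v sub unfolding pt_def by (metis vec.span_minimal subset_antisym)
  ultimately show ?thesis by blast
qed

lemma pt_sub: "vec.subspace S \<Longrightarrow> pt v \<subseteq> S \<longleftrightarrow> v \<in> S"
  unfolding pt_def by (metis insert_subset vec.span_base vec.span_minimal vec.span_superset empty_subsetI singletonI subset_trans)

lemma pt_eq: assumes "v \<noteq> 0" "w \<noteq> 0" shows "pt v = pt w \<longleftrightarrow> (\<exists>k. w = k *s v)"
proof
  assume "pt v = pt w"
  then have "w \<in> pt v" unfolding pt_def by (metis vec.span_base singletonI)
  then show "\<exists>k. w = k *s v" unfolding pt_eq_range by auto
next
  assume "\<exists>k. w = k *s v"
  then obtain k where k: "w = k *s v" by blast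
  show "pt v = pt w"
  proof (cases "k = 0")
    case True
    then show ?thesis using k assms by simp
  next
    case False
    have "pt w \<subseteq> pt v" unfolding pt_eq_range k by (auto simp: vector_smult_assoc)
    moreover have "pt v \<subseteq> pt w"
    proof
      fix u assume "u \<in> pt v"
      then obtain j where "u = j *s v" unfolding pt_eq_range by auto
      then have "u = (j / k) *s w" using False k by (simp add: vector_smult_assoc)
      then show "u \<in> pt w" unfolding pt_eq_range by auto
    qed
    ultimately show ?thesis by blast
  qed
qed

context ch2 begin

lemma pt_Q0: "pt (v::'a^5) \<in> Q0 \<longleftrightarrow> v \<noteq> 0 \<and> Qform v = 0"
proof
  assume "pt v \<in> Q0"
  then have pp: "proj_point (pt v)" and z: "\<forall>u\<in>pt v. Qform u = 0" by (auto simp: Q0_def)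
  have "v \<noteq> 0" using pp unfolding proj_point_def pt_def by auto
  moreover have "Qform v = 0" using z unfolding pt_def by (simp add: vec.span_base)
  ultimately show "v \<noteq> 0 \<and> Qform v = 0" by blast
next
  assume "v \<noteq> 0 \<and> Qform v = 0"
  then show "pt v \<in> Q0" unfolding Q0_def using proj_point_pt
    by (auto simp: pt_eq_range Q_scale)
qed

lemma Q0_ex: "U \<in> Q0 \<Longrightarrow> \<exists>v::'a^5. v \<noteq> 0 \<and> Qform v = 0 \<and> U = pt v"
  using proj_point_ex pt_Q0 unfolding Q0_def by blast

end

lemma span4: "x \<in> vec.span {b1, b2, b3, b4 :: 'a::field^5} \<longleftrightarrow>
   (\<exists>y1 y2 y3 y4. x = y1 *s b1 + y2 *s b2 + y3 *s b3 + y4 *s b4)"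
proof -
  have "x \<in> vec.span {b1, b2, b3, b4} \<longleftrightarrow>
    (\<exists>k ka kb kc. x - (k *s b1 + (ka *s b2 + kb *s b3)) = kc *s b4)"
    by (simp add: vec.span_insert vec.span_singleton diff_diff_eq)
  also have "\<dots> \<longleftrightarrow> (\<exists>y1 y2 y3 y4. x = y1 *s b1 + y2 *s b2 + y3 *s b3 + y4 *s b4)"
    by (simp add: diff_eq_eq add_ac)
  finally show ?thesis .
qed

context ch2 begin

lemma ell_data:
  assumes "elliptic_solid S"
  obtains b1 b2 b3 b4 c d where "vec.subspace S" "vec.dim S = 4"
    "S = vec.span {b1, b2, b3, b4}" "(c::'a) \<noteq> 0" "\<forall>t. t^2 + t + d \<noteq> 0"
    "\<And>y1 y2 y3 y4 z1 z2 z3 z4. Bf (y1 *s b1 + y2 *s b2 + y3 *s b3 + y4 *s b4) (z1 *s b1 + z2 *s b2 + z3 *s b3 + z4 *s b4)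
        = c * (y1*z2 + y2*z1 + y3*z4 + y4*z3)"
    "\<And>y1 y2 y3 y4. Qform (y1 *s b1 + y2 *s b2 + y3 *s b3 + y4 *s b4) = c * (y1 * y2 + y3^2 + y3 * y4 + d * y4^2)"
proof -
  from assms obtain b1 b2 b3 b4 c d where
    sub: "vec.subspace S" and dim: "vec.dim S = 4" and S: "S = vec.span {b1, b2, b3, b4}"
    and c: "(c::'a) \<noteq> 0" and an: "\<forall>t. t^2 + t + d \<noteq> 0"
    and Q: "\<And>y1 y2 y3 y4. Qform (y1 *s b1 + y2 *s b2 + y3 *s b3 + y4 *s b4) = c * (y1 * y2 + y3^2 + y3 * y4 + d * y4^2)"
    unfolding elliptic_solid_def by blast
  have B: "Bf (y1 *s b1 + y2 *s b2 + y3 *s b3 + y4 *s b4) (z1 *s b1 + z2 *s b2 + z3 *s b3 + z4 *s b4)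
        = c * (y1*z2 + y2*z1 + y3*z4 + y4*z3)" for y1 y2 y3 y4 z1 z2 z3 z4
  proof -
    let ?y = "y1 *s b1 + y2 *s b2 + y3 *s b3 + y4 *s b4"
    let ?z = "z1 *s b1 + z2 *s b2 + z3 *s b3 + z4 *s b4"
    have sum: "?y + ?z = (y1+z1) *s b1 + (y2+z2) *s b2 + (y3+z3) *s b3 + (y4+z4) *s b4"
      by (simp add: algebra_simps vec.scale_left_distrib)
    have "Bf ?y ?z = Qform (?y + ?z) - Qform ?y - Qform ?z" using Q_add[of ?y ?z] by simp
    also have "\<dots> = c * ((y1+z1) * (y2+z2) + (y3+z3)^2 + (y3+z3) * (y4+z4) + d * (y4+z4)^2)
        - c * (y1 * y2 + y3^2 + y3 * y4 + d * y4^2) - c * (z1 * z2 + z3^2 + z3 * z4 + d * z4^2)"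
      unfolding sum Q by simp
    also have "\<dots> = c * (y1*z2 + y2*z1 + y3*z4 + y4*z3) + 2 * (c * (y3*z3 + d*y4*z4))"
      by (simp add: algebra_simps power2_eq_square)
    finally show ?thesis using two by simp
  qed
  show ?thesis using that[OF sub dim S c an B Q] .
qed

lemma ell_nondeg:
  assumes "elliptic_solid (S::('a^5) set)" "x \<in> S" "\<forall>z\<in>S. Bf x z = 0"
  shows "x = 0"
proof -
  obtain b1 b2 b3 b4 c d where sub: "vec.subspace S" and S: "S = vec.span {b1, b2, b3, b4}"
    and c: "(c::'a) \<noteq> 0"
    and B: "\<And>(y1::'a) y2 y3 y4 z1 z2 z3 z4. Bf (y1 *s b1 + y2 *s b2 + y3 *s b3 + y4 *s b4) (z1 *s b1 + z2 *s b2 + z3 *s b3 + z4 *s b4)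
        = c * (y1*z2 + y2*z1 + y3*z4 + y4*z3)"
    using ell_data[OF assms(1)] by metis
  obtain y1 y2 y3 y4 where x: "x = y1 *s b1 + y2 *s b2 + y3 *s b3 + y4 *s b4"
    using assms(2) S span4 by blast
  have inS: "z1 *s b1 + z2 *s b2 + z3 *s b3 + z4 *s b4 \<in> S" for z1 z2 z3 z4
    using S span4 by blast
  have "c * y2 = 0" using assms(3) inS[of 1 0 0 0] B[of y1 y2 y3 y4 1 0 0 0] x by simp
  moreover have "c * y1 = 0" using assms(3) inS[of 0 1 0 0] B[of y1 y2 y3 y4 0 1 0 0] x by simp
  moreover have "c * y4 = 0" using assms(3) inS[of 0 0 1 0] B[of y1 y2 y3 y4 0 0 1 0] x by simp
  moreover have "c * y3 = 0" using assms(3) inS[of 0 0 0 1] B[of y1 y2 y3 y4 0 0 0 1] x by simp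
  ultimately show ?thesis using c x by simp
qed

lemma ell_E1:
  assumes "elliptic_solid (S::('a^5) set)" "w \<in> S" "z \<in> S" "Qform w = 0" "Qform z = 0" "Bf w z = 0" "w \<noteq> 0"
  shows "\<exists>k. z = k *s w"
proof -
  obtain b1 b2 b3 b4 c d where sub: "vec.subspace S" and S: "S = vec.span {b1, b2, b3, b4}"
    and c: "(c::'a) \<noteq> 0" and an: "\<forall>t. t^2 + t + d \<noteq> 0"
    and B: "\<And>(y1::'a) y2 y3 y4 z1 z2 z3 z4. Bf (y1 *s b1 + y2 *s b2 + y3 *s b3 + y4 *s b4) (z1 *s b1 + z2 *s b2 + z3 *s b3 + z4 *s b4)
        = c * (y1*z2 + y2*z1 + y3*z4 + y4*z3)"
    and Q: "\<And>(y1::'a) y2 y3 y4. Qform (y1 *s b1 + y2 *s b2 + y3 *s b3 + y4 *s b4) = c * (y1 * y2 + y3^2 + y3 * y4 + d * y4^2)"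
    using ell_data[OF assms(1)] by metis
  obtain y1 y2 y3 y4 where w: "w = y1 *s b1 + y2 *s b2 + y3 *s b3 + y4 *s b4"
    using assms(2) S span4 by blast
  obtain z1 z2 z3 z4 where z: "z = z1 *s b1 + z2 *s b2 + z3 *s b3 + z4 *s b4"
    using assms(3) S span4 by blast
  have i: "y1*y2 + y3^2 + y3*y4 + d*y4^2 = 0" using assms(4) Q w c by simp
  have ii: "z1*z2 + z3^2 + z3*z4 + d*z4^2 = 0" using assms(5) Q z c by simp
  have iii: "y1*z2 + y2*z1 + y3*z4 + y4*z3 = 0" using assms(6) B w z c by simp
  have nz: "\<not> (y1 = 0 \<and> y2 = 0 \<and> y3 = 0 \<and> y4 = 0)" using w assms(7) by auto
  obtain k where k: "z1 = k*y1" "z2 = k*y2" "z3 = k*y3" "z4 = k*y4"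
    using E1s[OF two an i ii iii nz] by blast
  have "z = k *s w" unfolding z w k by (simp add: algebra_simps vec.scale_right_distrib)
  then show ?thesis by blast
qed

end

definition psum :: "('a::field^5) set \<Rightarrow> ('a^5) set \<Rightarrow> ('a^5) set" where
  "psum A B = {x + y |x y. x \<in> A \<and> y \<in> B}"

lemma psum_subspace: "vec.subspace A \<Longrightarrow> vec.subspace B \<Longrightarrow> vec.subspace (psum A B)"
  unfolding psum_def by (rule vec.subspace_sums)

lemma psum_dim: "vec.subspace A \<Longrightarrow> vec.subspace B \<Longrightarrow>
  vec.dim (psum A B) + vec.dim (A \<inter> B) = vec.dim A + vec.dim B"
  unfolding psum_def by (rule vec.dim_sums_Int)

lemma psum_sub1: assumes "vec.subspace B" shows "A \<subseteq> psum A B"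
proof
  fix x assume "x \<in> A"
  with assms show "x \<in> psum A B" unfolding psum_def
    by (metis (mono_tags, lifting) add.right_neutral mem_Collect_eq vec.subspace_0)
qed
lemma psum_sub2: assumes "vec.subspace A" shows "B \<subseteq> psum A B"
proof
  fix x assume "x \<in> B"
  with assms show "x \<in> psum A B" unfolding psum_def
    by (metis (mono_tags, lifting) add.left_neutral mem_Collect_eq vec.subspace_0)
qed
lemma psum_le: "vec.subspace C \<Longrightarrow> A \<subseteq> C \<Longrightarrow> B \<subseteq> C \<Longrightarrow> psum A B \<subseteq> C"
  unfolding psum_def by (auto intro: vec.subspace_add)

lemma dim5: "vec.dim (S :: ('a::field^5) set) \<le> 5"
  using vec.dim_subset_UNIV[of S] by (simp add: vec.dimension_def card_cart_basis)

lemma dim_lt: "vec.subspace A \<Longrightarrow> vec.subspace B \<Longrightarrow> A \<subset> B \<Longrightarrow> vec.dim A < vec.dim B"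
proof -
  assume a: "vec.subspace A" "vec.subspace B" "A \<subset> B"
  have "vec.span A = A" "vec.span B = B" using a vec.span_eq_iff by blast+
  then show ?thesis using vec.dim_psubset[of A B] a by metis
qed

lemma dim_eq_sub: "vec.subspace A \<Longrightarrow> vec.subspace B \<Longrightarrow> A \<subseteq> B \<Longrightarrow> vec.dim B \<le> vec.dim A \<Longrightarrow> A = B"
  by (rule vec.subspace_dim_equal)

lemma solids_int:
  fixes S1 S2 :: "('a::field^5) set"
  assumes "vec.subspace S1" "vec.subspace S2" "vec.dim S1 = 4" "vec.dim S2 = 4" "S1 \<noteq> S2"
  shows "vec.dim (S1 \<inter> S2) = 3"
proof -
  let ?P = "psum S1 S2"
  have sP: "vec.subspace ?P" using assms psum_subspace by blast
  have "S1 \<subseteq> ?P" using psum_sub1 assms by blast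
  have "S2 \<subseteq> ?P" using psum_sub2 assms by blast
  have "vec.dim ?P \<noteq> 4"
  proof
    assume "vec.dim ?P = 4"
    then have "S1 = ?P" "S2 = ?P" using dim_eq_sub[of S1 ?P] dim_eq_sub[of S2 ?P] assms sP
       \<open>S1 \<subseteq> ?P\<close> \<open>S2 \<subseteq> ?P\<close> by auto
    then show False using assms by simp
  qed
  moreover have "vec.dim ?P \<ge> 4" using vec.dim_subset[OF \<open>S1 \<subseteq> ?P\<close>] assms by simp
  moreover have "vec.dim ?P \<le> 5" by (rule dim5)
  ultimately have "vec.dim ?P = 5" by simp
  then show ?thesis using psum_dim[OF assms(1,2)] assms by simp
qed

lemma dim_add_vec:
  fixes P :: "('a::field^5) set"
  assumes "vec.subspace P" "v \<notin> P"
  shows "vec.dim (psum P (vec.span {v})) = vec.dim P + 1"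
proof -
  have v0: "v \<noteq> 0" using assms vec.subspace_0 by blast
  have "P \<inter> vec.span {v} \<subseteq> {0}"
  proof
    fix x assume x: "x \<in> P \<inter> vec.span {v}"
    then obtain k where k: "x = k *s v" by (auto simp: vec.span_singleton)
    show "x \<in> {0}"
    proof (cases "k = 0")
      case False
      have "v = inverse k *s x" using k False by simp
      then have "v \<in> P" using x assms(1) vec.subspace_scale by auto
      then show ?thesis using assms by simp
    qed (simp add: k)
  qed
  then have d0: "vec.dim (P \<inter> vec.span {v}) = 0" using vec.dim_eq_0 by blast
  have d1: "vec.dim (vec.span {v}) = 1" using v0 by simp
  show ?thesis using psum_dim[OF assms(1) vec.subspace_span[of "{v}"]] d0 d1 by linarith
qed

lemma span2: "vec.span {a, b :: 'a::field^5} = {s *s a + r *s b | s r. True}"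
  by (auto simp: vec.span_insert vec.span_singleton diff_eq_eq) (metis add.commute)+


definition ov :: "('a::field^5) set \<Rightarrow> ('a^5) set set" where "ov S = {p \<in> Q0. p \<subseteq> S}"

lemma ovoid_iff: "elliptic_ovoid X \<longleftrightarrow> (\<exists>S. elliptic_solid S \<and> X = ov S)"
  unfolding elliptic_ovoid_def ov_def by simp

lemma ell_sub: "elliptic_solid S \<Longrightarrow> vec.subspace S"
  unfolding elliptic_solid_def by simp
lemma ell_dim: "elliptic_solid S \<Longrightarrow> vec.dim S = 4"
  unfolding elliptic_solid_def by simp

context ch2 begin

lemma pt_in_ov: "vec.subspace S \<Longrightarrow> pt (v::'a^5) \<in> ov S \<longleftrightarrow> v \<noteq> 0 \<and> Qform v = 0 \<and> v \<in> S"
  unfolding ov_def using pt_Q0[of v] pt_sub[of S v] by simp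

lemma mem_ov: assumes S: "vec.subspace S"
  shows "p \<in> ov S \<longleftrightarrow> (\<exists>v::'a^5. v \<noteq> 0 \<and> Qform v = 0 \<and> v \<in> S \<and> p = pt v)"
proof
  assume "p \<in> ov S"
  then have "p \<in> Q0" "p \<subseteq> S" unfolding ov_def by auto
  then obtain v where v: "v \<noteq> 0" "Qform v = 0" "p = pt v" using Q0_ex by blast
  then have "v \<in> S" using pt_sub[OF S] \<open>p \<subseteq> S\<close> by simp
  then show "\<exists>v::'a^5. v \<noteq> 0 \<and> Qform v = 0 \<and> v \<in> S \<and> p = pt v" using v by blast
next
  show "\<exists>v::'a^5. v \<noteq> 0 \<and> Qform v = 0 \<and> v \<in> S \<and> p = pt v \<Longrightarrow> p \<in> ov S"
    using pt_in_ov[OF S] by auto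
qed

lemma B_neg2: "Bf x (- y) = - Bf x y" unfolding Bf_def by (simp add: algebra_simps)

lemma tangent:
  fixes T :: "('a^5) set"
  assumes T: "vec.subspace T" and w: "w \<in> T" "w \<noteq> 0" "Qform w = 0"
    and uniq: "\<And>z. z \<in> T \<Longrightarrow> z \<noteq> 0 \<Longrightarrow> Qform z = 0 \<Longrightarrow> \<exists>k. z = k *s w"
    and y: "y \<in> T"
  shows "Bf w y = 0"
proof (rule ccontr)
  assume nz: "Bf w y \<noteq> 0"
  define s where "s = Qform y / Bf w y"
  define z where "z = s *s w + y"
  have zT: "z \<in> T" unfolding z_def using T w y vec.subspace_add vec.subspace_scale by blast
  have "Qform z = s^2 * Qform w + Qform y + s * Bf w y"
    unfolding z_def by (simp add: Q_add Q_scale B_scale1)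
  also have "\<dots> = Qform y + Qform y" using w nz by (simp add: s_def)
  finally have Qz: "Qform z = 0" by simp
  have "z \<noteq> 0"
  proof
    assume "z = 0"
    then have "y = (- s) *s w" unfolding z_def by (simp add: eq_neg_iff_add_eq_0 add.commute)
    then have "Bf w y = 0" by (simp add: B_scale2 B_self B_neg2)
    then show False using nz by simp
  qed
  then obtain k where "z = k *s w" using uniq zT Qz by blast
  then have "y = k *s w - s *s w" unfolding z_def by (simp add: algebra_simps)
  then have "Bf w y = 0" by (simp add: B_diff2 B_scale2 B_self)
  then show False using nz by simp
qed

lemma tangent_ov:
  assumes S: "vec.subspace (S::('a^5) set)" and S': "vec.subspace S'" and I: "ov S \<inter> ov S' = {pt v}" and v: "v \<noteq> 0"
  shows "v \<in> S \<and> v \<in> S' \<and> Qform v = 0 \<and> (\<forall>y \<in> S \<inter> S'. Bf v y = 0)"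
proof -
  have "pt v \<in> ov S" "pt v \<in> ov S'" using I by auto
  then have vS: "v \<in> S" "v \<in> S'" "Qform v = 0" using pt_in_ov[OF S] pt_in_ov[OF S'] by simp_all
  have "\<forall>y \<in> S \<inter> S'. Bf v y = 0"
  proof
    fix y assume y: "y \<in> S \<inter> S'"
    show "Bf v y = 0"
    proof (rule tangent[OF vec.subspace_inter[OF S S'] _ v vS(3) _ y])
      show "v \<in> S \<inter> S'" using vS by simp
      fix z assume z: "z \<in> S \<inter> S'" "z \<noteq> 0" "Qform z = 0"
      then have "pt z \<in> ov S \<inter> ov S'" using pt_in_ov[OF S] pt_in_ov[OF S'] by simp
      then have "pt v = pt z" using I by auto
      then show "\<exists>k. z = k *s v" using pt_eq v z(2) by blast
    qed
  qed
  then show ?thesis using vS by blast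
qed

definition perp :: "('a^5) set \<Rightarrow> 'a^5 \<Rightarrow> ('a^5) set" where
  "perp S v = {y \<in> S. Bf v y = 0}"

lemma perp_subspace: "vec.subspace S \<Longrightarrow> vec.subspace (perp S v)"
  unfolding perp_def vec.subspace_def by (auto simp: B_add2 B_scale2)

lemma G:
  assumes E1: "elliptic_solid (S1::('a^5) set)" and EY: "elliptic_solid SY" and ne: "ov S1 \<noteq> ov SY"
    and I: "ov S1 \<inter> ov SY = {pt v}" and v: "v \<noteq> 0"
  shows "S1 \<inter> SY = perp S1 v \<and> vec.dim (perp S1 v) = 3"
proof -
  have s1: "vec.subspace S1" and sY: "vec.subspace SY" using E1 EY ell_sub by blast+
  note tv = tangent_ov[OF s1 sY I v]
  have d3: "vec.dim (S1 \<inter> SY) = 3"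
    using solids_int[OF s1 sY ell_dim[OF E1] ell_dim[OF EY]] ne by blast
  have sub: "S1 \<inter> SY \<subseteq> perp S1 v" using tv unfolding perp_def by auto
  have "perp S1 v \<subset> S1"
  proof -
    have "perp S1 v \<subseteq> S1" unfolding perp_def by auto
    moreover have "perp S1 v \<noteq> S1"
    proof
      assume "perp S1 v = S1"
      then have "\<forall>z\<in>S1. Bf v z = 0" unfolding perp_def by auto
      then have "v = 0" using ell_nondeg[OF E1] tv by blast
      then show False using v by simp
    qed
    ultimately show ?thesis by blast
  qed
  then have "vec.dim (perp S1 v) < 4" using dim_lt[OF perp_subspace[OF s1] s1] ell_dim[OF E1] by simp
  then have eq: "S1 \<inter> SY = perp S1 v"
    using dim_eq_sub[OF vec.subspace_inter[OF s1 sY] perp_subspace[OF s1] sub] d3 by simp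
  then show ?thesis using d3 by simp
qed

end

context ch2 begin

lemma pick:
  assumes "elliptic_solid (S::('a^5) set)" "elliptic_solid S'" "card (ov S \<inter> ov S') = 1"
  obtains w where "w \<noteq> 0" "ov S \<inter> ov S' = {pt w}" "w \<in> S" "w \<in> S'" "Qform w = 0"
    "\<forall>y \<in> S \<inter> S'. Bf w y = 0"
proof -
  have s: "vec.subspace S" "vec.subspace S'" using assms ell_sub by blast+
  obtain x where x: "ov S \<inter> ov S' = {x}" using assms(3) card_1_singletonE by blast
  then have "x \<in> ov S" by auto
  then obtain w where w: "w \<noteq> 0" "x = pt w" using mem_ov[OF s(1)] by blast
  then show ?thesis using that tangent_ov[OF s, of w] x by auto
qed

lemma nonprop:
  assumes "ov S \<inter> ov Si = {pt wi}" "ov S \<inter> ov Sj = {pt wj}" "ov Si \<inter> ov Sj = {pt v}"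
    "pt v \<notin> ov S" "wi \<noteq> 0" "wj \<noteq> 0"
  shows "\<not> (\<exists>k. wj = k *s (wi::'a^5))"
proof
  assume "\<exists>k. wj = k *s wi"
  then have "pt wi = pt wj" using pt_eq assms(5,6) by blast
  then have "pt wi \<in> ov Si \<inter> ov Sj" using assms(1,2) by auto
  then have "pt v = pt wi" using assms(3) by auto
  then show False using assms(1,4) by auto
qed

lemma mainA:
  fixes S1 S2 S3 S :: "('a^5) set"
  assumes E1: "elliptic_solid S1" and E2: "elliptic_solid S2" and E3: "elliptic_solid S3"
    and E: "elliptic_solid S"
    and ne12: "ov S1 \<noteq> ov S2" and ne13: "ov S1 \<noteq> ov S3"
    and I12: "ov S1 \<inter> ov S2 = {pt v}" and I13: "ov S1 \<inter> ov S3 = {pt v}"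
    and I23: "ov S2 \<inter> ov S3 = {pt v}" and v: "v \<noteq> 0"
    and C1: "card (ov S \<inter> ov S1) = 1" and C2: "card (ov S \<inter> ov S2) = 1"
    and C3: "card (ov S \<inter> ov S3) = 1"
  shows "pt v \<in> ov S"
proof (rule ccontr)
  assume nv: "pt v \<notin> ov S"
  have s1: "vec.subspace S1" and s: "vec.subspace S" using E1 E ell_sub by blast+
  have dS: "vec.dim S = 4" using E ell_dim by blast
  define P where "P = perp S1 v"
  have G12: "S1 \<inter> S2 = P" "vec.dim P = 3" using G[OF E1 E2 ne12 I12 v] P_def by auto
  have G13: "S1 \<inter> S3 = P" using G[OF E1 E3 ne13 I13 v] P_def by auto
  have sP: "vec.subspace P" unfolding P_def using perp_subspace[OF s1] .
  have P1: "P \<subseteq> S1" and P2: "P \<subseteq> S2" and P3: "P \<subseteq> S3" using G12 G13 by auto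
  define L where "L = S \<inter> P"
  have sL: "vec.subspace L" unfolding L_def using vec.subspace_inter[OF s sP] .
  have dL: "vec.dim L \<ge> 2"
    using psum_dim[OF s sP] dim5[of "psum S P"] dS G12(2) unfolding L_def by linarith
  obtain w1 where w1: "w1 \<noteq> 0" "ov S \<inter> ov S1 = {pt w1}" "w1 \<in> S" "w1 \<in> S1" "Qform w1 = 0"
    "\<forall>y \<in> S \<inter> S1. Bf w1 y = 0" using pick[OF E E1 C1] by blast
  obtain w2 where w2: "w2 \<noteq> 0" "ov S \<inter> ov S2 = {pt w2}" "w2 \<in> S" "w2 \<in> S2" "Qform w2 = 0"
    "\<forall>y \<in> S \<inter> S2. Bf w2 y = 0" using pick[OF E E2 C2] by blast
  obtain w3 where w3: "w3 \<noteq> 0" "ov S \<inter> ov S3 = {pt w3}" "w3 \<in> S" "w3 \<in> S3" "Qform w3 = 0"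
    "\<forall>y \<in> S \<inter> S3. Bf w3 y = 0" using pick[OF E E3 C3] by blast
  have o1: "\<forall>y\<in>L. Bf w1 y = 0" using w1(6) P1 unfolding L_def by auto
  have o2: "\<forall>y\<in>L. Bf w2 y = 0" using w2(6) P2 unfolding L_def by auto
  have o3: "\<forall>y\<in>L. Bf w3 y = 0" using w3(6) P3 unfolding L_def by auto
  have n12: "\<not> (\<exists>k. w2 = k *s w1)" using nonprop[OF w1(2) w2(2) I12 nv w1(1) w2(1)] .
  have n21: "\<not> (\<exists>k. w1 = k *s w2)" using nonprop[OF w2(2) w1(2) _ nv w2(1) w1(1)] I12 by (simp add: Int_commute)
  have n13: "\<not> (\<exists>k. w3 = k *s w1)" using nonprop[OF w1(2) w3(2) I13 nv w1(1) w3(1)] .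
  have n23: "\<not> (\<exists>k. w3 = k *s w2)" using nonprop[OF w2(2) w3(2) I23 nv w2(1) w3(1)] .
  have B12: "Bf w1 w2 \<noteq> 0" using ell_E1[OF E w1(3) w2(3) w1(5) w2(5) _ w1(1)] n12 by blast
  define M where "M = vec.span {w1, w2}"
  have sM: "vec.subspace M" unfolding M_def by simp
  have MS: "M \<subseteq> S" unfolding M_def using w1(3) w2(3) s by (simp add: vec.span_minimal)
  have ind: "vec.independent {w1, w2}"
  proof -
    have "w1 \<noteq> w2" using n12 by (metis vector_smult_lid)
    moreover have "vec.independent {w2}" using w2(1) by (simp add: vec.independent_insert)
    moreover have "w1 \<notin> vec.span {w2}" using n21 by (auto simp: vec.span_singleton)
    ultimately show ?thesis by (simp add: vec.independent_insert)
  qed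
  have dM: "vec.dim M = 2"
  proof -
    have "w1 \<noteq> w2" using n12 by (metis vector_smult_lid)
    then show ?thesis unfolding M_def using vec.dim_span_eq_card_independent[OF ind] by simp
  qed
  have hML: "M \<inter> L \<subseteq> {0}"
  proof
    fix u assume u: "u \<in> M \<inter> L"
    then obtain a b where ab: "u = a *s w1 + b *s w2" unfolding M_def span2 by auto
    have "Bf w1 u = b * Bf w1 w2" unfolding ab by (simp add: B_add2 B_scale2 B_self)
    then have b: "b = 0" using o1 u B12 by auto
    have "Bf w2 u = a * Bf w1 w2" unfolding ab by (simp add: B_add2 B_scale2 B_self B_sym[of w2 w1])
    then have a: "a = 0" using o2 u B12 by auto
    show "u \<in> {0}" using a b ab by simp
  qed
  have "vec.dim (M \<inter> L) = 0" using hML vec.dim_eq_0 by blast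
  then have dML: "vec.dim (psum M L) \<ge> 4" using psum_dim[OF sM sL] dM dL by linarith
  have LS: "L \<subseteq> S" unfolding L_def by auto
  have MLS: "psum M L = S"
    using dim_eq_sub[OF psum_subspace[OF sM sL] s psum_le[OF s MS LS]] dML dS by simp
  obtain m u where mu: "w3 = m + u" "m \<in> M" "u \<in> L"
    using w3(3) MLS unfolding psum_def by blast
  obtain a b where ab: "m = a *s w1 + b *s w2" using mu(2) unfolding M_def span2 by auto
  have uperp: "\<forall>y\<in>S. Bf u y = 0"
  proof
    fix y assume "y \<in> S"
    then obtain m' u' where mu': "y = m' + u'" "m' \<in> M" "u' \<in> L"
      using MLS unfolding psum_def by blast
    obtain a' b' where ab': "m' = a' *s w1 + b' *s w2" using mu'(2) unfolding M_def span2 by auto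
    have uw1: "Bf u w1 = 0" using o1 mu(3) B_sym by metis
    have uw2: "Bf u w2 = 0" using o2 mu(3) B_sym by metis
    have "Bf w3 u' = a * Bf w1 u' + b * Bf w2 u' + Bf u u'"
      unfolding mu(1) ab by (simp add: B_add1 B_scale1)
    then have uu: "Bf u u' = 0" using o1 o2 o3 mu'(3) by simp
    show "Bf u y = 0" unfolding mu'(1) ab' by (simp add: B_add2 B_scale2 uw1 uw2 uu)
  qed
  have "u = 0" using ell_nondeg[OF E _ uperp] mu(3) LS by blast
  then have w3ab: "w3 = a *s w1 + b *s w2" using mu(1) ab by simp
  have "Qform w3 = a * b * Bf w1 w2"
    unfolding w3ab by (simp add: Q_add Q_scale B_scale1 B_scale2 w1(5) w2(5))
  then have "a = 0 \<or> b = 0" using w3(5) B12 by simp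
  then show False
  proof
    assume "a = 0" then show False using n23 w3ab by simp
  next
    assume "b = 0" then show False using n13 w3ab by simp
  qed
qed

end

definition e0 :: "'a::field ^ 5" where "e0 = axis 0 1"

lemma Bf_e0: "Bf e0 y = 0"
  unfolding Bf_def e0_def by (simp add: axis_def)

lemma e0_nz: "e0 \<noteq> (0::'a::field^5)"
  unfolding e0_def by (simp add: axis_eq_0_iff)

lemma count_solids:
  fixes P :: "('a::field^5) set"
  assumes sP: "vec.subspace P" and dP: "vec.dim P = 3" and aP: "a \<notin> P"
  shows "\<exists>f :: 'a \<Rightarrow> ('a^5) set. \<forall>H. vec.subspace H \<and> vec.dim H = 4 \<and> P \<subseteq> H \<and> a \<notin> H \<longrightarrow> H \<in> range f"
proof -
  define H0 where "H0 = psum P (vec.span {a})"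
  have sH0: "vec.subspace H0" unfolding H0_def using psum_subspace[OF sP] by simp
  have dH0: "vec.dim H0 = 4" unfolding H0_def using dim_add_vec[OF sP aP] dP by simp
  have "H0 \<noteq> UNIV"
  proof
    assume "H0 = UNIV"
    then have "vec.dim H0 = 5" by (simp add: vec.dim_UNIV card_cart_basis)
    then show False using dH0 by simp
  qed
  then obtain b where b: "b \<notin> H0" by blast
  have aH0: "a \<in> H0" unfolding H0_def using psum_sub2[OF sP] vec.span_base by blast
  have PH0: "P \<subseteq> H0" unfolding H0_def using psum_sub1 vec.subspace_span by blast
  define f where "f t = psum P (vec.span {t *s a + b})" for t
  have "H \<in> range f" if H: "vec.subspace H" "vec.dim H = 4" "P \<subseteq> H" "a \<notin> H" for H
  proof -
    define L where "L = vec.span {a, b}"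
    have a0: "a \<noteq> 0" using aP vec.subspace_0[OF sP] by blast
    have ind: "vec.independent {a, b}"
    proof -
      have "a \<noteq> b" using aH0 b by blast
      moreover have "b \<noteq> 0" using b vec.subspace_0[OF sH0] by blast
      then have "vec.independent {b}" by (simp add: vec.independent_insert)
      moreover have "a \<notin> vec.span {b}"
      proof
        assume "a \<in> vec.span {b}"
        then obtain k where k: "a = k *s b" by (auto simp: vec.span_singleton)
        then have "k \<noteq> 0" using a0 by auto
        then have "b = inverse k *s a" using k by simp
        then have "b \<in> H0" using aH0 sH0 vec.subspace_scale by metis
        then show False using b by simp
      qed
      ultimately show ?thesis by (simp add: vec.independent_insert)
    qed
    have dL: "vec.dim L = 2"
    proof -
      have "a \<noteq> b" using aH0 b by blast
      then show ?thesis unfolding L_def using vec.dim_span_eq_card_independent[OF ind] by simp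
    qed
    have sL: "vec.subspace L" unfolding L_def by simp
    have "vec.dim (H \<inter> L) \<ge> 1"
      using psum_dim[OF H(1) sL] dim5[of "psum H L"] dL H(2) by linarith
    then have "\<not> (H \<inter> L \<subseteq> {0})" using vec.dim_eq_0 by (metis not_one_le_zero)
    then obtain h where h: "h \<in> H" "h \<in> L" "h \<noteq> 0" by blast
    then obtain s r where sr: "h = s *s a + r *s b" unfolding L_def span2 by auto
    have r: "r \<noteq> 0"
    proof
      assume "r = 0"
      then have hs: "h = s *s a" using sr by simp
      then have "s \<noteq> 0" using h(3) by auto
      then have "a = inverse s *s h" using hs by simp
      then have "a \<in> H" using h(1) H(1) vec.subspace_scale by metis
      then show False using H(4) by simp
    qed
    define g where "g = (s / r) *s a + b"
    have gh: "g = inverse r *s h" unfolding g_def sr using r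
      by (simp add: vec.scale_right_distrib divide_inverse mult.commute)
    have gH: "g \<in> H" using gh h(1) H(1) vec.subspace_scale by metis
    have gP: "g \<notin> P"
    proof
      assume "g \<in> P"
      have "b = g + (- (s / r)) *s a" unfolding g_def by simp
      moreover have "(- (s / r)) *s a \<in> vec.span {a}" unfolding vec.span_singleton by (rule rangeI)
      ultimately have "b \<in> H0" unfolding H0_def psum_def using \<open>g \<in> P\<close> by blast
      then show False using b by simp
    qed
    have sub: "f (s / r) \<subseteq> H"
      unfolding f_def using psum_le[OF H(1) H(3)] gH H(1) g_def
      by (simp add: vec.span_minimal)
    have df: "vec.dim (f (s / r)) = 4" unfolding f_def using dim_add_vec[OF sP gP[unfolded g_def]] dP by simp
    have "f (s / r) = H"
      using dim_eq_sub[OF _ H(1) sub] df H(2) psum_subspace[OF sP vec.subspace_span] unfolding f_def by simp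
    then show ?thesis by (metis rangeI)
  qed
  then show ?thesis by blast
qed

context ch2 begin

lemma e0_notin: "elliptic_solid (S::('a^5) set) \<Longrightarrow> e0 \<notin> S"
  using ell_nondeg[of S e0] Bf_e0 e0_nz by blast

lemma Ell_card:
  fixes P :: "('a^5) set"
  assumes fin: "finite (UNIV :: 'a set)" and sP: "vec.subspace P" and dP: "vec.dim P = 3"
    and eP: "e0 \<notin> P"
  shows "card {X. \<exists>S. elliptic_solid S \<and> P \<subseteq> S \<and> X = ov S} \<le> CARD('a)"
proof -
  obtain f :: "'a \<Rightarrow> ('a^5) set" where f:
    "\<And>H. vec.subspace H \<Longrightarrow> vec.dim H = 4 \<Longrightarrow> P \<subseteq> H \<Longrightarrow> e0 \<notin> H \<Longrightarrow> H \<in> range f"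
    using count_solids[OF sP dP eP] by blast
  have "{X. \<exists>S. elliptic_solid S \<and> P \<subseteq> S \<and> X = ov S} \<subseteq> (\<lambda>t. ov (f t)) ` UNIV"
  proof
    fix X assume "X \<in> {X. \<exists>S. elliptic_solid S \<and> P \<subseteq> S \<and> X = ov S}"
    then obtain S where S: "elliptic_solid S" "P \<subseteq> S" "X = ov S" by blast
    then have "S \<in> range f" using f ell_sub ell_dim e0_notin by blast
    then show "X \<in> (\<lambda>t. ov (f t)) ` UNIV" using S(3) by auto
  qed
  then have "card {X. \<exists>S. elliptic_solid S \<and> P \<subseteq> S \<and> X = ov S} \<le> card ((\<lambda>t. ov (f t)) ` (UNIV :: 'a set))"
    using fin by (simp add: card_mono)
  also have "\<dots> \<le> CARD('a)" by (rule card_image_le[OF fin])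
  finally show ?thesis .
qed

end

lemma fin_vec: assumes "finite (UNIV :: 'a set)" shows "finite (UNIV :: ('a^5) set)"
proof -
  have "finite (PiE (UNIV :: 5 set) (\<lambda>_. UNIV :: 'a set))" using assms by (intro finite_PiE) auto
  moreover have "PiE (UNIV :: 5 set) (\<lambda>_. UNIV :: 'a set) = UNIV" by auto
  ultimately have f: "finite (UNIV :: (5 \<Rightarrow> 'a) set)" by simp
  have "(UNIV :: ('a^5) set) = vec_lambda ` UNIV" by (metis surj_def vec_nth_inverse)
  then show ?thesis using f by (metis finite_imageI)
qed
lemma fin_all: assumes "finite (UNIV :: 'a set)" shows "finite (UNIV :: ('a^5) set set set)"
  using fin_vec[OF assms] by (simp add: Finite_Set.finite_set)

context ch2 begin

lemma part1:
  assumes fin: "finite (UNIV :: 'a set)"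
    and cl: "clique (C :: ('a^5) set set set)" and c4: "4 \<le> card C"
    and DC: "D \<subseteq> C" and d3: "card D = 3" and lD: "linear_clique D"
  shows "linear_clique C"
proof -
  obtain p R where ros: "rosette p R" and DR: "D \<subseteq> R" using lD unfolding linear_clique_def by blast
  have pQ: "p \<in> Q0" and Rov: "\<forall>X\<in>R. elliptic_ovoid X" and cR: "card R = CARD('a)"
    and Rpw: "\<forall>X\<in>R. \<forall>Y\<in>R. X \<noteq> Y \<longrightarrow> X \<inter> Y = {p}" using ros unfolding rosette_def by auto
  obtain O1 O2 O3 where D: "D = {O1, O2, O3}" and n12: "O1 \<noteq> O2" and n23: "O2 \<noteq> O3" and n13: "O1 \<noteq> O3"
    using d3 card_3_iff by metis
  obtain v where v: "v \<noteq> 0" "p = pt v" using Q0_ex[OF pQ] by blast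
  have OR: "O1 \<in> R" "O2 \<in> R" "O3 \<in> R" using D DR by auto
  obtain S1 where E1: "elliptic_solid S1" "O1 = ov S1" using Rov OR ovoid_iff by metis
  obtain S2 where E2: "elliptic_solid S2" "O2 = ov S2" using Rov OR ovoid_iff by metis
  obtain S3 where E3: "elliptic_solid S3" "O3 = ov S3" using Rov OR ovoid_iff by metis
  have I12: "ov S1 \<inter> ov S2 = {pt v}" using Rpw OR n12 E1 E2 v by auto
  have I13: "ov S1 \<inter> ov S3 = {pt v}" using Rpw OR n13 E1 E3 v by auto
  have I23: "ov S2 \<inter> ov S3 = {pt v}" using Rpw OR n23 E2 E3 v by auto
  define P where "P = perp S1 v"
  have dP: "vec.dim P = 3" using G[OF E1(1) E2(1) _ I12 v(1)] n12 E1 E2 P_def by auto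
  have sP: "vec.subspace P" unfolding P_def using perp_subspace ell_sub[OF E1(1)] by blast
  have PS1: "P \<subseteq> S1" unfolding P_def perp_def by auto
  have eP: "e0 \<notin> P" using e0_notin[OF E1(1)] PS1 by blast
  define Ell where "Ell = {X. \<exists>S. elliptic_solid S \<and> P \<subseteq> S \<and> X = ov S}"
  have inEll: "X \<in> Ell" if X: "elliptic_ovoid X" "X = O1 \<or> X \<inter> O1 = {p}" for X
  proof (cases "X = O1")
    case True
    then show ?thesis unfolding Ell_def using E1 PS1 by blast
  next
    case False
    then have XO: "X \<inter> O1 = {p}" using X by blast
    obtain SX where EX: "elliptic_solid SX" "X = ov SX" using X ovoid_iff by metis
    have "S1 \<inter> SX = P" using G[OF E1(1) EX(1) _ _ v(1)] False XO E1 EX v P_def by (auto simp: Int_commute)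
    then show ?thesis unfolding Ell_def using EX by blast
  qed
  have REll: "R \<subseteq> Ell"
  proof
    fix X assume XR: "X \<in> R"
    have "elliptic_ovoid X" using Rov XR by blast
    moreover have "X = O1 \<or> X \<inter> O1 = {p}" using Rpw XR OR(1) by blast
    ultimately show "X \<in> Ell" by (rule inEll)
  qed
  have CEll: "C \<subseteq> Ell"
  proof
    fix X assume XC: "X \<in> C"
    show "X \<in> Ell"
    proof (cases "X \<in> D")
      case True then show ?thesis using DR REll by blast
    next
      case False
      have Xov: "elliptic_ovoid X" using cl XC unfolding clique_def by blast
      obtain SX where EX: "elliptic_solid SX" "X = ov SX" using Xov ovoid_iff by metis
      have adj: "card (X \<inter> Oi) = 1" if Oi: "Oi \<in> D" for Oi
      proof -
        have "Oi \<in> C" "X \<noteq> Oi" using Oi DC False by auto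
        then have "adjacent X Oi" using cl XC unfolding clique_def by blast
        then show ?thesis unfolding adjacent_def by blast
      qed
      have C1: "card (ov SX \<inter> ov S1) = 1" using adj[of O1] D EX E1 by simp
      have C2: "card (ov SX \<inter> ov S2) = 1" using adj[of O2] D EX E2 by simp
      have C3: "card (ov SX \<inter> ov S3) = 1" using adj[of O3] D EX E3 by simp
      have "pt v \<in> ov SX"
        using mainA[OF E1(1) E2(1) E3(1) EX(1) _ _ I12 I13 I23 v(1) C1 C2 C3] n12 n13 E1 E2 E3 by simp
      then have pX: "p \<in> X \<inter> O1" using EX v I12 E1 by auto
      have "card (X \<inter> O1) = 1" using adj[of O1] D by simp
      then obtain y where "X \<inter> O1 = {y}" by (rule card_1_singletonE)
      then have "X \<inter> O1 = {p}" using pX by auto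
      then show ?thesis using inEll Xov by blast
    qed
  qed
  have finU: "finite (UNIV :: ('a^5) set set set)" using fin_all[OF fin] .
  have "card (C \<union> R) \<le> card Ell"
    using CEll REll finU by (intro card_mono) (auto intro: finite_subset)
  also have "\<dots> \<le> CARD('a)" unfolding Ell_def using Ell_card[OF fin sP dP eP] .
  finally have "card (C \<union> R) \<le> card R" using cR by simp
  then have "R = C \<union> R" using card_seteq[of "C \<union> R" R] finU by (auto intro: finite_subset)
  then have "C \<subseteq> R" by blast
  then show ?thesis unfolding linear_clique_def using cl ros by blast
qed

end

theorem proposition3p2:
  fixes n :: nat
  assumes "finite (UNIV :: 'a::field set)" and "CARD('a) = 2 ^ n"
  shows "(\<forall>C :: ('a ^ 5) set set set. clique C \<and> card C \<ge> 4 \<and>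
            (\<exists>D \<subseteq> C. card D = 3 \<and> linear_clique D) \<longrightarrow> linear_clique C)
       \<and> (\<forall>C D :: ('a ^ 5) set set set. linear_clique C \<and> clique D \<and> \<not> linear_clique D
            \<longrightarrow> card (C \<inter> D) \<le> 2)"
proof -
  interpret ch2 "TYPE('a)" by unfold_locales (rule char2[OF assms])
  have P1: "\<forall>C :: ('a ^ 5) set set set. clique C \<and> card C \<ge> 4 \<and>
            (\<exists>D \<subseteq> C. card D = 3 \<and> linear_clique D) \<longrightarrow> linear_clique C"
    using part1[OF assms(1)] by blast
  have finU: "finite (UNIV :: ('a^5) set set set)" using fin_all[OF assms(1)] .
  have P2: "card (C \<inter> D) \<le> 2"
    if C: "linear_clique C" and D: "clique D" and nD: "\<not> linear_clique D" for C D :: "('a ^ 5) set set set"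
  proof (rule ccontr)
    assume "\<not> card (C \<inter> D) \<le> 2"
    then have "3 \<le> card (C \<inter> D)" by simp
    then obtain E where E: "E \<subseteq> C \<inter> D" "card E = 3" by (meson obtain_subset_with_card_n)
    obtain p R where ros: "rosette p R" and CR: "C \<subseteq> R" and cC: "clique C"
      using C unfolding linear_clique_def by blast
    have EC: "E \<subseteq> C" and ED: "E \<subseteq> D" using E(1) by auto
    have cE: "clique E" using cC EC unfolding clique_def by (meson subsetD)
    have lE: "linear_clique E" unfolding linear_clique_def using cE ros CR EC by (meson order_trans)
    have finD: "finite D" by (rule finite_subset[OF subset_UNIV finU])
    show False
    proof (cases "card D \<ge> 4")
      case True
      have "\<exists>D' \<subseteq> D. card D' = 3 \<and> linear_clique D'" using ED E(2) lE by blast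
      then have "linear_clique D" using P1 D True by blast
      then show False using nD by simp
    next
      case False
      have "card E \<le> card D" using ED finD by (rule card_mono[rotated])
      then have "card D \<le> card E" using False E(2) by simp
      then have "E = D" using card_seteq[OF finD ED] by simp
      then show False using lE nD by simp
    qed
  qed
  show ?thesis using P1 P2 by blast
qed


end
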